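(* Let $N>4$ and $A\in C^1(\mathbb{R}^N,\mathbb{R}^N)\cap L^\infty(\mathbb{R}^N,\mathbb{R}^N)\cap L^r(\mathbb{R}^N,\mathbb{R}^N)$ for some $1<r<N$. Then for every $\xi\in\mathbb{R}^N$, $$\lim_{\mu\to0^+}\frac12\int_{\mathbb{R}^N}|A(x)|^2|z_{\mu,\xi}(x)|^2dx=0.$$
   Context: $\kappa_N=(N(N-2))^{(N-2)/4}$ and $z_{\mu,\xi}(x)=\kappa_N\mu^{(N-2)/2}(\mu^2+|x-\xi|^2)^{-(N-2)/2}$ for $\mu>0$, $\xi\in\mathbb{R}^N$. *)

theory Defs
  imports "HOL-Analysis.Analysis"
begin

definition kappa :: "real \<Rightarrow> real" where
  "kappa N = (N * (N - 2)) powr ((N - 2) / 4)"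

definition bubble :: "real \<Rightarrow> 'a::euclidean_space \<Rightarrow> 'a \<Rightarrow> real" where
  "bubble \<mu> \<xi> x = (let N = real DIM('a) in
     kappa N * \<mu> powr ((N - 2) / 2) * (\<mu>\<^sup>2 + (norm (x - \<xi>))\<^sup>2) powr (- (N - 2) / 2))"

end

theory Submission
  imports Defs
begin

lemma oneD_tail:
  fixes e :: real assumes "e > 1"
  shows "(\<integral>\<^sup>+t. ennreal (indicator {1..} t * t powr (-e)) \<partial>lborel) < \<infinity>"
proof -
  have "((\<lambda>x. x powr (-e)) has_integral -((1::real) powr (-e+1)) / (-e+1)) {1..}"
    using assms by (intro has_integral_powr_to_inf) auto
  then have "integral\<^sup>N lborel (\<lambda>x. indicator {1..} x * x powr (-e)) = -((1::real) powr (-e+1)) / (-e+1)"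
    by (intro nn_integral_has_integral_lebesgue) auto
  then show ?thesis by simp
qed

lemma pw_bound:
  fixes t s :: real assumes "s > 0" and False: "t \<noteq> 0"
  shows "(1 + t\<^sup>2) powr (-s) \<le> abs t powr (-(2 * s))"
proof -
  have "(1 + t\<^sup>2) powr (-s) \<le> (abs t powr 2) powr (-s)"
    using assms False by (intro powr_mono2') auto
  also have "\<dots> = abs t powr (-(2 * s))" unfolding powr_powr by simp
  finally show ?thesis .
qed

lemma oneD:
  fixes s :: real assumes "s > 1/2"
  shows "(\<integral>\<^sup>+t. ennreal ((1 + t\<^sup>2) powr (-s)) \<partial>lborel) < \<infinity>"
proof -
  define k where "k = (\<lambda>t::real. ennreal (indicator {1..} t * t powr (-(2 * s))))"
  have km[measurable]: "k \<in> borel_measurable borel" unfolding k_def by measurable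
  have "(\<integral>\<^sup>+t. ennreal ((1 + t\<^sup>2) powr (-s)) \<partial>lborel)
      \<le> (\<integral>\<^sup>+t. (indicator {-1..1} t + k t + k (-t)) \<partial>lborel)"
  proof (intro nn_integral_mono)
    fix t :: real
    show "ennreal ((1 + t\<^sup>2) powr (-s)) \<le> indicator {-1..1} t + k t + k (-t)"
    proof (cases "\<bar>t\<bar> \<le> 1")
      case True
      have "1 \<le> (1 + t\<^sup>2) powr s"
        using assms by (intro ge_one_powr_ge_zero) auto
      then have "(1 + t\<^sup>2) powr (-s) \<le> 1"
        by (simp add: powr_minus inverse_le_1_iff)
      then have "ennreal ((1 + t\<^sup>2) powr (-s)) \<le> indicator {-1..1} t"
        using True by (auto simp: indicator_def abs_le_iff)
      then show ?thesis by (meson add_increasing2 order_trans zero_le le_iff_add)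
    next
      case False
      have b: "(1 + t\<^sup>2) powr (-s) \<le> abs t powr (-(2 * s))" using assms False by (intro pw_bound) auto
      show ?thesis
      proof (cases "t > 1")
        case True
        then have "ennreal ((1 + t\<^sup>2) powr (-s)) \<le> k t" using b by (auto simp: k_def)
        then show ?thesis by (metis add.commute add_increasing2 zero_le)
      next
        case f2: False
        then have "ennreal ((1 + t\<^sup>2) powr (-s)) \<le> k (-t)" using b False by (auto simp: k_def)
        then show ?thesis by (metis add.commute add_increasing2 zero_le)
      qed
    qed
  qed
  also have "\<dots> = 2 + (\<integral>\<^sup>+t. k t \<partial>lborel) + (\<integral>\<^sup>+t. k (-t) \<partial>lborel)"
    using nn_integral_add[of "\<lambda>t. indicator {-1..1::real} t + k t" lborel "\<lambda>t. k (-t)"]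
      nn_integral_add[of "\<lambda>t. indicator {-1..1::real} t" lborel k] by simp
  also have "(\<integral>\<^sup>+t. k (-t) \<partial>lborel) = (\<integral>\<^sup>+t. k t \<partial>lborel)"
    using nn_integral_real_affine[OF km, of "-1" 0] by simp
  also have "2 + (\<integral>\<^sup>+t. k t \<partial>lborel) + (\<integral>\<^sup>+t. k t \<partial>lborel) < \<infinity>"
    using oneD_tail[of "2 * s"] assms unfolding k_def by (simp add: less_top)
  finally show ?thesis .
qed

lemma nD:
  assumes "DIM('a::euclidean_space) > 4"
  shows "(\<integral>\<^sup>+w. ennreal ((1 + (norm (w::'a))\<^sup>2) powr (-(real DIM('a) - 2))) \<partial>lborel) < \<infinity>"
proof -
  define n where "n = real DIM('a)"
  define s where "s = (n - 2) / n"
  have n4: "n > 4" using assms unfolding n_def by simp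
  have s: "s > 1/2" using n4 unfolding s_def by (simp add: field_simps)
  have pt: "(1 + (norm w)\<^sup>2) powr (-(n - 2)) \<le> (\<Prod>b\<in>Basis. (1 + (w \<bullet> b)\<^sup>2) powr (-s))" for w :: 'a
  proof -
    have "(1 + (norm w)\<^sup>2) powr (-(n - 2)) = ((1 + (norm w)\<^sup>2) powr (-s)) ^ DIM('a)"
    proof -
      have pos: "1 + (norm w)\<^sup>2 \<noteq> 0" by (metis add_pos_nonneg zero_le_power2 zero_less_one less_irrefl)
      show ?thesis using n4 by (subst powr_power[OF pos]) (auto simp: s_def n_def)
    qed
    also have "\<dots> = (\<Prod>b\<in>(Basis::'a set). (1 + (norm w)\<^sup>2) powr (-s))" by simp
    also have "\<dots> \<le> (\<Prod>b\<in>Basis. (1 + (w \<bullet> b)\<^sup>2) powr (-s))"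
    proof (intro prod_mono conjI)
      fix b :: 'a assume b: "b \<in> Basis"
      show "0 \<le> (1 + (norm w)\<^sup>2) powr (-s)" by simp
      have "\<bar>w \<bullet> b\<bar> \<le> norm w" using b by (rule Basis_le_norm)
      then have "(w \<bullet> b)\<^sup>2 \<le> (norm w)\<^sup>2"
        by (metis abs_ge_zero power2_abs power_mono)
      then show "(1 + (norm w)\<^sup>2) powr (-s) \<le> (1 + (w \<bullet> b)\<^sup>2) powr (-s)"
        using s by (intro powr_mono2') (auto intro: add_pos_nonneg)
    qed
    finally show ?thesis .
  qed
  have "(\<integral>\<^sup>+w. ennreal ((1 + (norm (w::'a))\<^sup>2) powr (-(real DIM('a) - 2))) \<partial>lborel)
     \<le> (\<integral>\<^sup>+w. (\<Prod>b\<in>(Basis::'a set). ennreal ((1 + (w \<bullet> b)\<^sup>2) powr (-s))) \<partial>lborel)"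
  proof (intro nn_integral_mono)
    fix w :: 'a
    show "ennreal ((1 + (norm w)\<^sup>2) powr (-(real DIM('a) - 2))) \<le> (\<Prod>b\<in>Basis. ennreal ((1 + (w \<bullet> b)\<^sup>2) powr (-s)))"
      using pt[of w] unfolding n_def by (simp add: prod_ennreal ennreal_leI)
  qed
  also have "\<dots> = (\<Prod>b\<in>(Basis::'a set). (\<integral>\<^sup>+t. ennreal ((1 + t\<^sup>2) powr (-s)) \<partial>lborel))"
    by (rule nn_integral_lborel_prod) auto
  also have "\<dots> < \<infinity>"
    using oneD[OF s] by (simp add: power_less_top_ennreal)
  finally show ?thesis .
qed

lemma powr_sq: "(x::real) > 0 \<Longrightarrow> (x powr a)\<^sup>2 = x powr (2 * a)"
  by (subst powr_power) auto

lemma scale_id: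
  fixes \<xi> w :: "'a::euclidean_space" and \<mu> :: real
  assumes mu: "\<mu> > 0"
  shows "\<mu> ^ DIM('a) * (bubble \<mu> \<xi> (\<xi> + \<mu> *\<^sub>R w))\<^sup>2
    = (kappa (real DIM('a)))\<^sup>2 * \<mu>\<^sup>2 * (1 + (norm w)\<^sup>2) powr (-(real DIM('a) - 2))"
proof -
  define n where "n = real DIM('a)"
  define c where "c = 1 + (norm w)\<^sup>2"
  have c: "c > 0" unfolding c_def by (simp add: add_pos_nonneg)
  have "\<mu>\<^sup>2 + (norm (\<xi> + \<mu> *\<^sub>R w - \<xi>))\<^sup>2 = \<mu> powr 2 * c"
    using mu by (simp add: c_def power_mult_distrib algebra_simps)
  then have "bubble \<mu> \<xi> (\<xi> + \<mu> *\<^sub>R w) = kappa n * \<mu> powr ((n - 2) / 2) * (\<mu> powr 2 * c) powr (- (n - 2) / 2)"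
    unfolding bubble_def n_def Let_def by simp
  also have "\<dots> = kappa n * (\<mu> powr ((n - 2) / 2) * \<mu> powr (- (n - 2))) * c powr (- (n - 2) / 2)"
  proof -
    have e: "(\<mu> powr 2) powr (- (n - 2) / 2) = \<mu> powr (- (n - 2))" by (subst powr_powr) (rule arg_cong[where f="\<lambda>e. \<mu> powr e"], simp add: field_simps)
    have m: "(\<mu> powr 2 * c) powr (- (n - 2) / 2) = (\<mu> powr 2) powr (- (n - 2) / 2) * c powr (- (n - 2) / 2)"
      using c by (intro powr_mult)
    show ?thesis unfolding m e by (simp add: mult_ac)
  qed
  also have "\<mu> powr ((n - 2) / 2) * \<mu> powr (- (n - 2)) = \<mu> powr (-(n - 2) / 2)"
    unfolding powr_add[symmetric] by (rule arg_cong[where f="\<lambda>e. \<mu> powr e"]) (simp add: field_simps)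
  finally have b: "bubble \<mu> \<xi> (\<xi> + \<mu> *\<^sub>R w) = kappa n * \<mu> powr (-(n - 2) / 2) * c powr (- (n - 2) / 2)" .
  have "(\<mu> powr (-(n - 2) / 2))\<^sup>2 = \<mu> powr (-(n - 2))"
    unfolding powr_sq[OF mu] by (rule arg_cong[where f="\<lambda>e. \<mu> powr e"]) (simp add: field_simps)
  moreover have "(c powr (-(n - 2) / 2))\<^sup>2 = c powr (-(n - 2))"
    unfolding powr_sq[OF c] by (rule arg_cong[where f="\<lambda>e. c powr e"]) (simp add: field_simps)
  moreover have "\<mu> ^ DIM('a) * \<mu> powr (-(n - 2)) = \<mu>\<^sup>2"
  proof -
    have "\<mu> ^ DIM('a) = \<mu> powr n" using mu by (simp add: n_def powr_realpow)
    then have "\<mu> ^ DIM('a) * \<mu> powr (-(n - 2)) = \<mu> powr 2"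
      by (simp only: powr_add[symmetric]) (rule arg_cong[where f="\<lambda>e. \<mu> powr e"], simp add: field_simps)
    then show ?thesis using mu by simp
  qed
  ultimately show ?thesis
    unfolding b n_def[symmetric] c_def[symmetric] power_mult_distrib
    by (metis (no_types, lifting) mult.assoc mult.left_commute)
qed

lemma bubble_meas[measurable]: "bubble \<mu> \<xi> \<in> borel_measurable borel"
  unfolding bubble_def Let_def by measurable

lemma bubble_int_bound:
  fixes \<xi> :: "'a::euclidean_space" and \<mu> :: real
  assumes mu: "\<mu> > 0"
  shows "(\<integral>\<^sup>+x. ennreal ((bubble \<mu> \<xi> x)\<^sup>2) \<partial>lborel)
    = ennreal ((kappa (real DIM('a)))\<^sup>2 * \<mu>\<^sup>2) * (\<integral>\<^sup>+w. ennreal ((1 + (norm (w::'a))\<^sup>2) powr (-(real DIM('a) - 2))) \<partial>lborel)"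
proof -
  have "(\<integral>\<^sup>+x. ennreal ((bubble \<mu> \<xi> x)\<^sup>2) \<partial>lborel)
     = (\<integral>\<^sup>+w. ennreal (\<bar>\<mu>\<bar> ^ DIM('a)) * ennreal ((bubble \<mu> \<xi> (\<xi> + \<mu> *\<^sub>R w))\<^sup>2) \<partial>lborel)"
    using mu by (subst lborel_affine[of \<mu> \<xi>]) (simp_all add: nn_integral_density nn_integral_distr)
  also have "\<dots> = (\<integral>\<^sup>+w. ennreal ((kappa (real DIM('a)))\<^sup>2 * \<mu>\<^sup>2) * ennreal ((1 + (norm (w::'a))\<^sup>2) powr (-(real DIM('a) - 2))) \<partial>lborel)"
  proof (rule nn_integral_cong)
    fix w :: 'a
    show "ennreal (\<bar>\<mu>\<bar> ^ DIM('a)) * ennreal ((bubble \<mu> \<xi> (\<xi> + \<mu> *\<^sub>R w))\<^sup>2)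
      = ennreal ((kappa (real DIM('a)))\<^sup>2 * \<mu>\<^sup>2) * ennreal ((1 + (norm w)\<^sup>2) powr (-(real DIM('a) - 2)))"
      using scale_id[OF mu, of \<xi> w] mu by (simp add: ennreal_mult'[symmetric] ennreal_mult[symmetric])
  qed
  also have "\<dots> = ennreal ((kappa (real DIM('a)))\<^sup>2 * \<mu>\<^sup>2) * (\<integral>\<^sup>+w. ennreal ((1 + (norm (w::'a))\<^sup>2) powr (-(real DIM('a) - 2))) \<partial>lborel)"
    by (rule nn_integral_cmult) measurable
  finally show ?thesis .
qed

theorem mainTheorem7:
  fixes A :: "'a::euclidean_space \<Rightarrow> 'a" and r :: real
  assumes dim: "DIM('a) > 4"
    and C1: "\<exists>A'. (\<forall>x. (A has_derivative blinfun_apply (A' x)) (at x)) \<and> continuous_on UNIV A'"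
    and Linf: "A \<in> borel_measurable lborel" "\<exists>M. AE x in lborel. norm (A x) \<le> M"
    and r: "1 < r" "r < real DIM('a)"
    and Lr: "integrable lborel (\<lambda>x. norm (A x) powr r)"
  shows "\<forall>\<xi>. ((\<lambda>\<mu>. (1/2) * (LINT x|lborel. (norm (A x))\<^sup>2 * (bubble \<mu> \<xi> x)\<^sup>2)) \<longlongrightarrow> 0) (at_right 0)"
proof
  fix \<xi> :: 'a
  obtain M where M: "AE x in lborel. norm (A x) \<le> M" using Linf(2) by blast
  note Am[measurable] = Linf(1)
  define I where "I = (\<integral>\<^sup>+w. ennreal ((1 + (norm (w::'a))\<^sup>2) powr (-(real DIM('a) - 2))) \<partial>lborel)"
  have Ifin: "I < \<infinity>" unfolding I_def using nD[OF dim] .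
  obtain Ir where Ir: "I = ennreal Ir" "0 \<le> Ir" using Ifin by (cases I rule: ennreal_cases) auto
  define C where "C = M\<^sup>2 * (kappa (real DIM('a)))\<^sup>2 * Ir"
  have C: "C \<ge> 0" unfolding C_def using Ir by simp
  have bound: "0 \<le> (LINT x|lborel. (norm (A x))\<^sup>2 * (bubble \<mu> \<xi> x)\<^sup>2)
     \<and> (LINT x|lborel. (norm (A x))\<^sup>2 * (bubble \<mu> \<xi> x)\<^sup>2) \<le> C * \<mu>\<^sup>2" if mu: "\<mu> > 0" for \<mu> :: real
  proof
    show "0 \<le> (LINT x|lborel. (norm (A x))\<^sup>2 * (bubble \<mu> \<xi> x)\<^sup>2)"
      by (intro integral_nonneg_AE) auto
    have "(LINT x|lborel. (norm (A x))\<^sup>2 * (bubble \<mu> \<xi> x)\<^sup>2)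
        = enn2real (\<integral>\<^sup>+x. ennreal ((norm (A x))\<^sup>2 * (bubble \<mu> \<xi> x)\<^sup>2) \<partial>lborel)"
      by (intro integral_eq_nn_integral) auto
    also have "\<dots> \<le> C * \<mu>\<^sup>2"
    proof (rule enn2real_leI)
      show "0 \<le> C * \<mu>\<^sup>2" using C by simp
      have "(\<integral>\<^sup>+x. ennreal ((norm (A x))\<^sup>2 * (bubble \<mu> \<xi> x)\<^sup>2) \<partial>lborel)
          \<le> (\<integral>\<^sup>+x. ennreal (M\<^sup>2) * ennreal ((bubble \<mu> \<xi> x)\<^sup>2) \<partial>lborel)"
      proof (intro nn_integral_mono_AE)
        show "AE x in lborel. ennreal ((norm (A x))\<^sup>2 * (bubble \<mu> \<xi> x)\<^sup>2) \<le> ennreal (M\<^sup>2) * ennreal ((bubble \<mu> \<xi> x)\<^sup>2)"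
          using M
        proof eventually_elim
          case (elim x)
          have "(norm (A x))\<^sup>2 \<le> M\<^sup>2" using elim by (intro power_mono) auto
          then have "(norm (A x))\<^sup>2 * (bubble \<mu> \<xi> x)\<^sup>2 \<le> M\<^sup>2 * (bubble \<mu> \<xi> x)\<^sup>2"
            by (intro mult_right_mono) auto
          then show ?case by (simp add: ennreal_mult'[symmetric] ennreal_leI)
        qed
      qed
      also have "\<dots> = ennreal (M\<^sup>2) * (\<integral>\<^sup>+x. ennreal ((bubble \<mu> \<xi> x)\<^sup>2) \<partial>lborel)"
        by (rule nn_integral_cmult) measurable
      also have "\<dots> = ennreal (M\<^sup>2) * (ennreal ((kappa (real DIM('a)))\<^sup>2 * \<mu>\<^sup>2) * I)"
        unfolding bubble_int_bound[OF mu] I_def ..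
      also have "\<dots> = ennreal (C * \<mu>\<^sup>2)"
        unfolding C_def Ir(1) using Ir(2)
        by (simp add: ennreal_mult[symmetric] mult_ac)
      finally show "(\<integral>\<^sup>+x. ennreal ((norm (A x))\<^sup>2 * (bubble \<mu> \<xi> x)\<^sup>2) \<partial>lborel) \<le> ennreal (C * \<mu>\<^sup>2)" .
    qed
    finally show "(LINT x|lborel. (norm (A x))\<^sup>2 * (bubble \<mu> \<xi> x)\<^sup>2) \<le> C * \<mu>\<^sup>2" .
  qed
  have lim: "((\<lambda>\<mu>. (1/2) * (C * \<mu>\<^sup>2)) \<longlongrightarrow> 0) (at_right (0::real))"
  proof -
    have "((\<lambda>\<mu>. (1/2) * (C * \<mu>\<^sup>2)) \<longlongrightarrow> (1/2) * (C * 0\<^sup>2)) (at_right (0::real))"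
      by (intro tendsto_intros)
    then show ?thesis by simp
  qed
  show "((\<lambda>\<mu>. (1/2) * (LINT x|lborel. (norm (A x))\<^sup>2 * (bubble \<mu> \<xi> x)\<^sup>2)) \<longlongrightarrow> 0) (at_right 0)"
  proof (rule tendsto_sandwich[OF _ _ tendsto_const lim])
    show "\<forall>\<^sub>F \<mu> in at_right 0. 0 \<le> (1/2) * (LINT x|lborel. (norm (A x))\<^sup>2 * (bubble \<mu> \<xi> x)\<^sup>2)"
      using bound by (auto simp: eventually_at_right_less intro!: eventually_at_rightI[of 0 1])
    show "\<forall>\<^sub>F \<mu> in at_right 0. (1/2) * (LINT x|lborel. (norm (A x))\<^sup>2 * (bubble \<mu> \<xi> x)\<^sup>2) \<le> (1/2) * (C * \<mu>\<^sup>2)"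
      using bound by (auto intro!: eventually_at_rightI[of 0 1])
  qed
qed
end
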